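(* Let $m\ge2$, $w$ an infinite periodic or Sturmian word over $\{0,1\}$ with slope $\alpha=\pi(w)$, $\beta=\frac1{m+\alpha}$, and $A=A(m,w)$ with the $\mathbb{Z}_2$-grading in which $z_1^{(1)},a$ are even and $b$ is odd. For every real $\varepsilon>0$ there exists $n_0$ such that whenever $n\ge n_0$ and $P_{k,n-k}(A)\ne0$, $$\beta-\varepsilon\le\frac{n-k}{n}\le\beta+\varepsilon.$$
   Context: $F$ is a field of characteristic zero. $A(m,w)$: basis $\{a,b,z_j^{(i)}: i\ge1,1\le j\le m+w_i\}$, products $z_j^{(i)}a=z_{j+1}^{(i)}$ for $j<m+w_i$, $z_{m+w_i}^{(i)}b=z_1^{(i+1)}$, all other products zero. The grading: $A_0=\mathrm{span}\{a,z_j^{(i)}:i\text{ odd}\}$, $A_1=\mathrm{span}\{b,z_j^{(i)}:i\text{ even}\}$. Slope $\pi(w)=\lim_n(w_1+\dots+w_n)/n$. $P_{k,n-k}(A)=P_{k,n-k}/(P_{k,n-k}\cap Id^{gr}(A))$, where $P_{k,n-k}$ is the space of polynomials multilinear in even variables $x_1..x_k$ and odd variables $y_1..y_{n-k}$ in the free nonassociative algebra and $Id^{gr}(A)$ the graded identities of $A$. *)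

theory Defs
  imports Complex_Main "HOL-Library.Multiset"
begin

text \<open>An infinite word over {0,1} is a map u :: nat => nat with values in {0,1};
  the paper's letter w_i (i >= 1) is u (i - 1).\<close>

definition binary_word :: "(nat \<Rightarrow> nat) \<Rightarrow> bool" where
  "binary_word u \<longleftrightarrow> (\<forall>i. u i \<in> {0, 1})"

definition periodic_word :: "(nat \<Rightarrow> nat) \<Rightarrow> bool" where
  "periodic_word u \<longleftrightarrow> (\<exists>p>0. \<forall>i. u (i + p) = u i)"

definition factors :: "(nat \<Rightarrow> nat) \<Rightarrow> nat \<Rightarrow> nat list set" where
  "factors u n = {map u [i..<i + n] | i. True}"

definition sturmian_word :: "(nat \<Rightarrow> nat) \<Rightarrow> bool" where
  "sturmian_word u \<longleftrightarrow> (\<forall>n. finite (factors u n) \<and> card (factors u n) = n + 1)"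

definition has_slope :: "(nat \<Rightarrow> nat) \<Rightarrow> real \<Rightarrow> bool" where
  "has_slope u \<alpha> \<longleftrightarrow> (\<lambda>n. (\<Sum>i<n. real (u i)) / real n) \<longlonglongrightarrow> \<alpha>"

text \<open>Basis symbols: GA = a, GB = b, GZ i j = z_j^(i).\<close>
datatype gen = GA | GB | GZ nat nat

definition basis_set :: "nat \<Rightarrow> (nat \<Rightarrow> nat) \<Rightarrow> gen set" where
  "basis_set m u = {GA, GB} \<union> {GZ i j | i j. 1 \<le> i \<and> 1 \<le> j \<and> j \<le> m + u (i - 1)}"

text \<open>Product of basis elements (None = zero).\<close>
fun bprod :: "nat \<Rightarrow> (nat \<Rightarrow> nat) \<Rightarrow> gen \<Rightarrow> gen \<Rightarrow> gen option" where
  "bprod m u (GZ i j) GA = (if j < m + u (i - 1) then Some (GZ i (j + 1)) else None)"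
| "bprod m u (GZ i j) GB = (if j = m + u (i - 1) then Some (GZ (i + 1) 1) else None)"
| "bprod m u _ _ = None"

definition supp :: "('b \<Rightarrow> 'f::zero) \<Rightarrow> 'b set" where
  "supp v = {c. v c \<noteq> 0}"

definition A_carrier :: "nat \<Rightarrow> (nat \<Rightarrow> nat) \<Rightarrow> (gen \<Rightarrow> 'f::field) set" where
  "A_carrier m u = {v. finite (supp v) \<and> supp v \<subseteq> basis_set m u}"

definition A_mult :: "nat \<Rightarrow> (nat \<Rightarrow> nat) \<Rightarrow> (gen \<Rightarrow> 'f::field) \<Rightarrow> (gen \<Rightarrow> 'f) \<Rightarrow> (gen \<Rightarrow> 'f)" where
  "A_mult m u v1 v2 = (\<lambda>c. \<Sum>p \<in> supp v1 \<times> supp v2.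
      if bprod m u (fst p) (snd p) = Some c then v1 (fst p) * v2 (snd p) else 0)"

definition A_even :: "nat \<Rightarrow> (nat \<Rightarrow> nat) \<Rightarrow> (gen \<Rightarrow> 'f::field) set" where
  "A_even m u = {v \<in> A_carrier m u. supp v \<subseteq> {GA} \<union> {GZ i j | i j. odd i}}"

definition A_odd :: "nat \<Rightarrow> (nat \<Rightarrow> nat) \<Rightarrow> (gen \<Rightarrow> 'f::field) set" where
  "A_odd m u = {v \<in> A_carrier m u. supp v \<subseteq> {GB} \<union> {GZ i j | i j. even i}}"

text \<open>Graded variables: X i = even variable x_i, Y j = odd variable y_j.\<close>
datatype gvar = X nat | Y nat

datatype 'v nmon = Var 'v | Mul "'v nmon" "'v nmon"

fun leaves :: "'v nmon \<Rightarrow> 'v list" where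
  "leaves (Var v) = [v]"
| "leaves (Mul s t) = leaves s @ leaves t"

definition is_poly :: "(gvar nmon \<Rightarrow> 'f::field) \<Rightarrow> bool" where
  "is_poly f \<longleftrightarrow> finite (supp f)"

definition P_space :: "nat \<Rightarrow> nat \<Rightarrow> (gvar nmon \<Rightarrow> 'f::field) set" where
  "P_space k l = {f. is_poly f \<and> (\<forall>t \<in> supp f.
      mset (leaves t) = mset (map X [1..<k+1] @ map Y [1..<l+1]))}"

fun mon_eval :: "nat \<Rightarrow> (nat \<Rightarrow> nat) \<Rightarrow> (gvar \<Rightarrow> gen \<Rightarrow> 'f::field) \<Rightarrow> gvar nmon \<Rightarrow> gen \<Rightarrow> 'f" where
  "mon_eval m u \<phi> (Var v) = \<phi> v"
| "mon_eval m u \<phi> (Mul s t) = A_mult m u (mon_eval m u \<phi> s) (mon_eval m u \<phi> t)"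

definition poly_eval :: "nat \<Rightarrow> (nat \<Rightarrow> nat) \<Rightarrow> (gvar \<Rightarrow> gen \<Rightarrow> 'f::field) \<Rightarrow> (gvar nmon \<Rightarrow> 'f) \<Rightarrow> gen \<Rightarrow> 'f" where
  "poly_eval m u \<phi> f = (\<lambda>c. \<Sum>t \<in> supp f. f t * mon_eval m u \<phi> t c)"

definition graded_subst :: "nat \<Rightarrow> (nat \<Rightarrow> nat) \<Rightarrow> (gvar \<Rightarrow> gen \<Rightarrow> 'f::field) \<Rightarrow> bool" where
  "graded_subst m u \<phi> \<longleftrightarrow> (\<forall>i. \<phi> (X i) \<in> A_even m u) \<and> (\<forall>j. \<phi> (Y j) \<in> A_odd m u)"

definition graded_identity :: "nat \<Rightarrow> (nat \<Rightarrow> nat) \<Rightarrow> (gvar nmon \<Rightarrow> 'f::field) \<Rightarrow> bool" where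
  "graded_identity m u f \<longleftrightarrow> is_poly f \<and>
     (\<forall>\<phi>. graded_subst m u \<phi> \<longrightarrow> poly_eval m u \<phi> f = (\<lambda>_. 0))"

text \<open>P_{k,l}(A) = P_{k,l} / (P_{k,l} \<inter> Id^gr(A)) is nonzero iff P_{k,l} is not
  contained in Id^gr(A).  The field F is fixed by the type 'f.\<close>
definition P_quot_nonzero :: "'f::field itself \<Rightarrow> nat \<Rightarrow> (nat \<Rightarrow> nat) \<Rightarrow> nat \<Rightarrow> nat \<Rightarrow> bool" where
  "P_quot_nonzero (_ :: 'f itself) m u k l \<longleftrightarrow>
     (\<exists>f :: gvar nmon \<Rightarrow> 'f. f \<in> P_space k l \<and> \<not> graded_identity m u f)"

end

theory Submission
  imports Defs
begin

definition win :: "(nat \<Rightarrow> nat) \<Rightarrow> nat \<Rightarrow> nat \<Rightarrow> nat list" where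
  "win x t n = map x [t..<t+n]"

lemma factors_win: "factors x n = range (\<lambda>i. win x i n)"
  by (auto simp: factors_def win_def)

lemma length_win[simp]: "length (win x t n) = n" by (simp add: win_def)

lemma nth_win[simp]: "k < n \<Longrightarrow> win x t n ! k = x (t + k)"
  by (simp add: win_def)

lemma win_eq_iff: "win x a n = win x b n \<longleftrightarrow> (\<forall>k<n. x (a+k) = x (b+k))"
  by (auto simp: list_eq_iff_nth_eq)

lemma win_Suc: "win x t (Suc n) = win x t n @ [x (t+n)]"
  by (simp add: win_def)

lemma take_win: "m \<le> n \<Longrightarrow> take m (win x t n) = win x t m"
  by (simp add: win_def take_map)

lemma win_in_factors[simp]: "win x t n \<in> factors x n"
  by (simp add: factors_win)

lemma factors_0: "factors x 0 = {[]}"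
  by (auto simp: factors_win win_def)

lemma take_factors: "take n ` factors x (Suc n) = factors x n"
proof
  show "take n ` factors x (Suc n) \<subseteq> factors x n"
    by (auto simp: factors_win take_win)
  show "factors x n \<subseteq> take n ` factors x (Suc n)"
  proof
    fix v assume "v \<in> factors x n"
    then obtain i where "v = win x i n" by (auto simp: factors_win)
    then have "v = take n (win x i (Suc n))" by (simp add: take_win)
    then show "v \<in> take n ` factors x (Suc n)" by auto
  qed
qed



lemma length_factors: "v \<in> factors x n \<Longrightarrow> length v = n"
  by (auto simp: factors_win)

lemma rs_unique:
  assumes fin: "\<And>n. finite (factors x n)" and cd: "\<And>n. card (factors x n) = n + 1"
    and a1: "v1 @ [0] \<in> factors x (Suc n)" and a2: "v1 @ [1] \<in> factors x (Suc n)"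
    and b1: "v2 @ [0] \<in> factors x (Suc n)" and b2: "v2 @ [1] \<in> factors x (Suc n)"
  shows "v1 = v2"
proof (rule ccontr)
  assume ne: "v1 \<noteq> v2"
  define F' where "F' = factors x (Suc n)"
  define F where "F = factors x n"
  define A where "A v = {y \<in> F'. take n y = v}" for v
  have l1: "length v1 = n" using length_factors[OF a1] by simp
  have l2: "length v2 = n" using length_factors[OF b1] by simp
  have tf: "take n ` F' = F" unfolding F'_def F_def by (rule take_factors)
  have U: "F' = \<Union>(A ` F)" using tf unfolding A_def by auto
  have finF: "finite F" "finite F'" unfolding F_def F'_def using fin by auto
  have finA: "\<forall>v\<in>F. finite (A v)" using finF unfolding A_def by auto
  have "card F' = (\<Sum>v\<in>F. card (A v))"
    unfolding U by (rule card_UN_disjoint) (use finF finA in \<open>auto simp: A_def\<close>)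
  have ge1: "card (A v) \<ge> 1" if "v \<in> F" for v
  proof -
    from that tf obtain y where "y \<in> F'" "take n y = v" by auto
    then have "A v \<noteq> {}" unfolding A_def by auto
    then show ?thesis using finA that by (simp add: Suc_le_eq card_gt_0_iff)
  qed
  have v1F: "v1 \<in> F" using tf a1 l1 unfolding F'_def by force
  have v2F: "v2 \<in> F" using tf b1 l2 unfolding F'_def by force
  have ge2: "card (A v) \<ge> 2" if "v \<in> F" "v @ [0] \<in> F'" "v @ [1] \<in> F'" "length v = n" for v
  proof -
    have "{v @ [0], v @ [1]} \<subseteq> A v" using that unfolding A_def by auto
    then have "card {v @ [0], v @ [1]} \<le> card (A v)" using finA that by (intro card_mono) auto
    then show ?thesis by simp
  qed
  have s: "(\<Sum>v\<in>F. card (A v)) = card F + (\<Sum>v\<in>F. card (A v) - 1)"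
  proof -
    have "(\<Sum>v\<in>F. card (A v)) = (\<Sum>v\<in>F. 1 + (card (A v) - 1))"
      by (rule sum.cong) (use ge1 in force)+
    also have "\<dots> = card F + (\<Sum>v\<in>F. card (A v) - 1)" unfolding sum.distrib by simp
    finally show ?thesis .
  qed
  have "(\<Sum>v\<in>{v1,v2}. card (A v) - 1) \<le> (\<Sum>v\<in>F. card (A v) - 1)"
    by (rule sum_mono2) (use finF v1F v2F in auto)
  moreover have "(\<Sum>v\<in>{v1,v2}. card (A v) - 1) \<ge> 2"
    using ne ge2[OF v1F _ _ l1] ge2[OF v2F _ _ l2] a1 a2 b1 b2 unfolding F'_def by simp
  ultimately have "card F' \<ge> card F + 2"
    using \<open>card F' = _\<close> s by linarith
  then show False using cd unfolding F'_def F_def by simp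
qed



lemma evper_cover:
  assumes "P > 0" "\<forall>s\<ge>S. x (s+P) = x s"
  shows "\<exists>i'<S+P. win x i N = win x i' N"
proof (induction i rule: less_induct)
  case (less i)
  show ?case
  proof (cases "i < S+P")
    case True then show ?thesis by blast
  next
    case False
    have "win x i N = win x (i-P) N"
      unfolding win_eq_iff
    proof (intro allI impI)
      fix k assume "k < N"
      have "i - P + k \<ge> S" using False by simp
      then have "x (i - P + k + P) = x (i - P + k)" using assms(2) by blast
      moreover have "i - P + k + P = i + k" using False by simp
      ultimately show "x (i+k) = x (i - P + k)" by simp
    qed
    moreover from less.IH[of "i-P"] obtain i' where "i' < S+P" "win x (i-P) N = win x i' N"
      using False assms(1) by auto
    ultimately show ?thesis by auto
  qed
qed

lemma evper_contra:
  assumes cd: "\<And>n. card (factors x n) = n + 1"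
    and "P > 0" "\<forall>s\<ge>S. x (s+P) = x s"
  shows False
proof -
  let ?N = "S+P"
  have "factors x ?N \<subseteq> (\<lambda>i. win x i ?N) ` {..<S+P}"
    using evper_cover[OF assms(2,3)] by (fastforce simp: factors_win)
  then have "card (factors x ?N) \<le> card ((\<lambda>i. win x i ?N) ` {..<S+P})"
    by (intro card_mono) auto
  also have "\<dots> \<le> S+P" using card_image_le[of "{..<S+P}"] by simp
  finally show False using cd[of ?N] by simp
qed

lemma no_growth_evper:
  assumes fin: "finite (factors y k)" "finite (factors y (Suc k))"
    and le: "card (factors y (Suc k)) \<le> card (factors y k)"
  shows "\<exists>S P. P > 0 \<and> (\<forall>s\<ge>S. y (s+P) = y s)"
proof -
  define F where "F = factors y k"
  define F' where "F' = factors y (Suc k)"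
  have tf: "take k ` F' = F" unfolding F_def F'_def by (rule take_factors)
  have "card F \<le> card F'" using tf card_image_le fin unfolding F'_def by blast
  then have "card (take k ` F') = card F'" using tf le unfolding F_def F'_def by simp
  then have inj: "inj_on (take k) F'" using fin unfolding F'_def by (intro eq_card_imp_inj_on) auto
  have det: "y (a+k) = y (b+k)" if "win y a k = win y b k" for a b
  proof -
    have "take k (win y a (Suc k)) = take k (win y b (Suc k))" using that by (simp add: take_win)
    then have "win y a (Suc k) = win y b (Suc k)"
      using inj unfolding F'_def by (auto dest: inj_onD)
    then show ?thesis by (simp add: win_Suc)
  qed
  have "\<not> inj_on (\<lambda>s. win y s k) {..card F}"
  proof
    assume "inj_on (\<lambda>s. win y s k) {..card F}"
    then have "card ((\<lambda>s. win y s k) ` {..card F}) = Suc (card F)" by (simp add: card_image)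
    moreover have "(\<lambda>s. win y s k) ` {..card F} \<subseteq> F" unfolding F_def by auto
    then have "card ((\<lambda>s. win y s k) ` {..card F}) \<le> card F"
      using fin unfolding F_def by (intro card_mono) auto
    ultimately show False by simp
  qed
  then obtain a b where ab: "a \<noteq> b" "win y a k = win y b k" unfolding inj_on_def by auto
  obtain s1 s2 where s12: "s1 < s2" "win y s1 k = win y s2 k"
  proof (cases "a < b")
    case True then show ?thesis using that ab by blast
  next
    case False then have "b < a" using ab(1) by simp
    then show ?thesis using that ab by auto
  qed
  have step: "\<forall>j. win y (s1+j) k = win y (s2+j) k"
  proof
    fix j show "win y (s1+j) k = win y (s2+j) k"
    proof (induction j)
      case 0 then show ?case using s12 by simp
    next
      case (Suc j)
      have d: "y (s1+j+k) = y (s2+j+k)" using det[OF Suc] by simp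
      show ?case unfolding win_eq_iff
      proof (intro allI impI)
        fix q assume "q < k"
        show "y (s1 + Suc j + q) = y (s2 + Suc j + q)"
        proof (cases "Suc q < k")
          case True
          then have "y (s1+j+Suc q) = y (s2+j+Suc q)" using Suc unfolding win_eq_iff by blast
          then show ?thesis by simp
        next
          case False
          then have "q = k - 1" "k > 0" using \<open>q<k\<close> by auto
          then show ?thesis using d by (simp add: add.assoc)
        qed
      qed
    qed
  qed
  show ?thesis
  proof (intro exI conjI allI impI)
    show "s2 - s1 > 0" using s12 by simp
    fix s assume "s \<ge> s1 + k"
    then have "s = s1 + (s - (s1+k)) + k" by simp
    then obtain j where "s = s1 + j + k" by blast
    then show "y (s + (s2 - s1)) = y s" using det[OF step[rule_format, of j]] s12(1) by (simp add: ac_simps)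
  qed
qed

lemma win_shift: "win (\<lambda>s. x (s+T)) i n = win x (i+T) n"
  by (simp add: list_eq_iff_nth_eq ac_simps)

lemma factors_shift_sub: "factors (\<lambda>s. x (s+T)) n \<subseteq> factors x n"
proof
  fix v assume "v \<in> factors (\<lambda>s. x (s+T)) n"
  then obtain i where "v = win (\<lambda>s. x (s+T)) i n" by (auto simp: factors_win)
  also have "\<dots> = win x (i+T) n" by (rule win_shift)
  finally show "v \<in> factors x n" by simp
qed

lemma recur:
  assumes fin: "\<And>n. finite (factors x n)" and cd: "\<And>n. card (factors x n) = n + 1"
  shows "\<exists>s\<ge>T. win x s l = win x q l"
proof (rule ccontr)
  assume no: "\<not> ?thesis"
  define y where "y = (\<lambda>s. x (s+T))"
  define N where "N = q + l"
  have finy: "finite (factors y n)" for n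
    using fin factors_shift_sub[of x T n] unfolding y_def by (rule rev_finite_subset)
  have sub: "factors y N \<subseteq> factors x N - {win x 0 N}"
  proof
    fix v assume "v \<in> factors y N"
    then obtain i where v: "v = win y i N" by (auto simp: factors_win)
    have v2: "v = win x (i+T) N" unfolding v y_def by (rule win_shift)
    have "v \<noteq> win x 0 N"
    proof
      assume "v = win x 0 N"
      then have "\<forall>k<N. x (i+T+k) = x k" using v2 by (simp add: win_eq_iff)
      then have w: "win x (i+T+q) l = win x q l" unfolding win_eq_iff N_def
        by (simp add: add.assoc)
      have "i+T+q \<ge> T" by simp
      then show False using no w by blast
    qed
    then show "v \<in> factors x N - {win x 0 N}" using v2 by simp
  qed
  have "card (factors y N) \<le> card (factors x N - {win x 0 N})"
    using fin by (intro card_mono sub) auto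
  also have "\<dots> = N" using cd[of N] fin[of N] by simp
  finally have cN: "card (factors y N) \<le> N" .
  have "\<exists>k<N. card (factors y (Suc k)) \<le> card (factors y k)"
  proof (rule ccontr)
    assume "\<not> ?thesis"
    then have gr: "\<forall>k<N. card (factors y k) < card (factors y (Suc k))" by auto
    have "\<forall>k\<le>N. card (factors y k) \<ge> k + 1"
    proof (intro allI impI)
      fix k assume "k \<le> N" then show "card (factors y k) \<ge> k + 1"
      proof (induction k)
        case 0 then show ?case by (simp add: factors_0)
      next
        case (Suc k)
        have "k < N" using Suc.prems by simp
        then have "card (factors y k) < card (factors y (Suc k))" using gr by blast
        moreover have "card (factors y k) \<ge> k+1" using Suc.IH \<open>k<N\<close> by simp
        ultimately show ?case by simp
      qed
    qed
    then have "card (factors y N) \<ge> N+1" by blast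
    then show False using cN by simp
  qed
  then obtain k where "card (factors y (Suc k)) \<le> card (factors y k)" by blast
  then obtain S P where SP: "P > 0" "\<forall>s\<ge>S. y (s+P) = y s"
    using no_growth_evper finy by blast
  have "\<forall>s\<ge>S+T. x (s+P) = x s"
  proof (intro allI impI)
    fix s assume "s \<ge> S+T"
    then have "s - T \<ge> S" by simp
    then have "y (s - T + P) = y (s - T)" using SP by blast
    then show "x (s+P) = x s" unfolding y_def using \<open>s \<ge> S+T\<close> by simp
  qed
  then show False using evper_contra[OF cd SP(1)] by blast
qed



definition W :: "(nat \<Rightarrow> nat) \<Rightarrow> nat \<Rightarrow> nat \<Rightarrow> nat" where
  "W x i L = (\<Sum>k<L. x (i+k))"

definition pat :: "(nat \<Rightarrow> nat) \<Rightarrow> nat \<Rightarrow> nat \<Rightarrow> nat \<Rightarrow> bool" where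
  "pat x n s1 s2 \<longleftrightarrow> x s1 = 0 \<and> x (s1+n+1) = 0 \<and> x s2 = 1 \<and> x (s2+n+1) = 1 \<and>
     (\<forall>k<n. x (s1+1+k) = x (s2+1+k))"

lemma W_split: "W x i (a + b) = W x i a + W x (i+a) b"
  by (induction b) (simp_all add: W_def add.assoc)

lemma W_Suc: "W x i (Suc L) = W x i L + x (i+L)"
  by (simp add: W_def)

lemma W_le: assumes "\<forall>i. x i \<le> 1" shows "W x i L \<le> L"
proof -
  have "W x i L \<le> (\<Sum>k<L. 1)" unfolding W_def by (rule sum_mono) (use assms in auto)
  then show ?thesis by simp
qed

lemma W_Suc_shift: "W x p (Suc k) = x p + (\<Sum>q<k. x (p+1+q))"
  unfolding W_def by (subst sum.lessThan_Suc_shift) simp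

lemma W_decomp: "W x p (Suc (Suc k)) = x p + (\<Sum>q<k. x (p+1+q)) + x (p+1+k)"
  using W_Suc_shift[of x p k] W_Suc[of x p "Suc k"] by simp

lemma unbal_pat:
  assumes bin: "\<forall>i. x i \<le> 1"
  shows "W x i L \<ge> W x j L + 2 \<Longrightarrow> \<exists>n s1 s2. n + 2 \<le> L \<and> pat x n s1 s2"
proof (induction L arbitrary: i j rule: less_induct)
  case (less L)
  define P where "P m = int (W x i m) - int (W x j m)" for m
  have sub: "int (W x (i+a) (b-a)) - int (W x (j+a) (b-a)) = P b - P a" if "a \<le> b" for a b
  proof -
    have "b = a + (b - a)" using that by simp
    then have "W x i b = W x i a + W x (i+a) (b-a)" "W x j b = W x j a + W x (j+a) (b-a)"
      by (metis W_split)+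
    then show ?thesis unfolding P_def by simp
  qed
  show ?case
  proof (cases "\<exists>a b. a \<le> b \<and> b \<le> L \<and> b - a < L \<and> \<bar>P b - P a\<bar> \<ge> 2")
    case True
    then obtain a b where ab: "a \<le> b" "b \<le> L" "b - a < L" "\<bar>P b - P a\<bar> \<ge> 2" by blast
    show ?thesis
    proof (cases "P b - P a \<ge> 2")
      case True
      then have "W x (i+a) (b-a) \<ge> W x (j+a) (b-a) + 2" using sub[OF ab(1)] by linarith
      then obtain n s1 s2 where "n + 2 \<le> b - a" "pat x n s1 s2" using less.IH[OF ab(3)] by blast
      moreover have "n + 2 \<le> L" using ab \<open>n + 2 \<le> b - a\<close> by simp
      ultimately show ?thesis by blast
    next
      case False
      then have "P a - P b \<ge> 2" using ab(4) by linarith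
      then have "W x (j+a) (b-a) \<ge> W x (i+a) (b-a) + 2" using sub[OF ab(1)] by linarith
      then obtain n s1 s2 where "n + 2 \<le> b - a" "pat x n s1 s2" using less.IH[OF ab(3)] by blast
      moreover have "n + 2 \<le> L" using ab \<open>n + 2 \<le> b - a\<close> by simp
      ultimately show ?thesis by blast
    qed
  next
    case False
    then have bal: "\<bar>P b - P a\<bar> \<le> 1" if "a \<le> b" "b \<le> L" "b - a < L" for a b
      using that by fastforce
    have P0: "P 0 = 0" unfolding P_def by (simp add: W_def)
    have PL: "P L \<ge> 2" using less.prems unfolding P_def by linarith
    have "W x i L \<le> L" using W_le[OF bin] .
    then have L2: "L \<ge> 2" using PL unfolding P_def by linarith
    have Pm: "P m = 1" if "1 \<le> m" "m < L" for m
    proof -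
      have "\<bar>P m - P 0\<bar> \<le> 1" using bal[of 0 m] that by simp
      moreover have "\<bar>P L - P m\<bar> \<le> 1" using bal[of m L] that by simp
      ultimately show ?thesis using P0 PL by linarith
    qed
    have PL2: "P L = 2"
    proof -
      have "\<bar>P L - P (L-1)\<bar> \<le> 1" using bal[of "L-1" L] L2 by simp
      then show ?thesis using Pm[of "L-1"] L2 PL by simp
    qed
    have D: "P (Suc k) - P k = int (x (i+k)) - int (x (j+k))" for k
      unfolding P_def by (simp add: W_Suc)
    have bin2: "x a = 0 \<or> x a = 1" for a using bin[rule_format, of a] by auto
    have d0: "x i = 1 \<and> x j = 0"
    proof -
      have "P (Suc 0) - P 0 = 1" using Pm[of 1] L2 P0 by simp
      then have "int (x i) - int (x j) = 1" using D[of 0] by simp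
      then show ?thesis using bin2[of i] bin2[of j] by auto
    qed
    have dL: "x (i+(L-1)) = 1 \<and> x (j+(L-1)) = 0"
    proof -
      have "P (Suc (L-1)) - P (L-1) = 1" using Pm[of "L-1"] L2 PL2 by simp
      then have "int (x (i+(L-1))) - int (x (j+(L-1))) = 1" using D[of "L-1"] by simp
      then show ?thesis using bin2[of "i+(L-1)"] bin2[of "j+(L-1)"] by auto
    qed
    have dm: "x (j+1+k) = x (i+1+k)" if "k < L - 2" for k
    proof -
      have "P (Suc (Suc k)) - P (Suc k) = 0" using Pm[of "Suc k"] Pm[of "Suc (Suc k)"] that by simp
      then show ?thesis using D[of "Suc k"] by simp
    qed
    have "pat x (L-2) j i"
    proof -
      have e1: "j + (L-2) + 1 = j + (L-1)" "i + (L-2) + 1 = i + (L-1)" using L2 by simp_all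
      show ?thesis unfolding pat_def using d0 dL dm e1 by (simp only:) simp
    qed
    moreover have "L - 2 + 2 \<le> L" using L2 by simp
    ultimately show ?thesis by blast
  qed
qed



lemma min_pat_pal:
  assumes bin: "\<forall>i. x i \<le> 1" and p: "pat x n s1 s2" and mn: "\<forall>n'<n. \<forall>a b. \<not> pat x n' a b"
  shows "\<forall>k<n. x (s1+1+k) = x (s1+1+(n-1-k))"
proof (rule ccontr)
  define c where "c q = x (s1+1+q)" for q
  assume "\<not> ?thesis"
  then have "\<exists>k. k < n \<and> c k \<noteq> c (n-1-k)" unfolding c_def by auto
  then obtain k where k: "k < n" "c k \<noteq> c (n-1-k)"
    and kmin: "\<forall>q<k. \<not> (q < n \<and> c q \<noteq> c (n-1-q))"
    using exists_least_iff[of "\<lambda>k. k < n \<and> c k \<noteq> c (n-1-k)"] by blast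
  have bin2: "x a = 0 \<or> x a = 1" for a using bin[rule_format, of a] by auto
  have s2c: "x (s2+1+q) = c q" if "q < n" for q using p that unfolding pat_def c_def by auto
  have sym: "c q = c (n-1-q)" if "q < k" for q using kmin that k(1) by auto
  define S where "S = (\<Sum>q<k. c q)"
  have Srev: "(\<Sum>q<k. c (n-k+q)) = S"
  proof -
    have "(\<Sum>q<k. c (n-k+q)) = (\<Sum>q<k. c (k - Suc q))"
    proof (rule sum.cong)
      fix q assume "q \<in> {..<k}"
      then have q: "q < k" by simp
      have "c (k - Suc q) = c (n - 1 - (k - Suc q))" using sym[of "k - Suc q"] q by simp
      moreover have "n - 1 - (k - Suc q) = n - k + q" using q k(1) by simp
      ultimately show "c (n-k+q) = c (k - Suc q)" by simp
    qed simp
    also have "\<dots> = S" unfolding S_def by (rule sum.nat_diff_reindex)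
    finally show ?thesis .
  qed
  have unb: False if h: "W x i (Suc (Suc k)) \<ge> W x j (Suc (Suc k)) + 2" for i j
  proof -
    obtain n' a b where "n' + 2 \<le> Suc (Suc k)" "pat x n' a b" using unbal_pat[OF bin h] by blast
    then show False using mn k(1) by auto
  qed
  have p0: "x s1 = 0" "x (s1+n+1) = 0" "x s2 = 1" "x (s2+n+1) = 1" using p unfolding pat_def by auto
  show False
  proof (cases "c k = 0")
    case True
    then have ck1: "c (n-1-k) = 1" using k(2) bin2 unfolding c_def by metis
    have WA: "W x s1 (Suc (Suc k)) = S"
      unfolding W_decomp S_def using p0 True unfolding c_def by simp
    define pB where "pB = s2 + 1 + (n-1-k)"
    have "x pB = 1" unfolding pB_def using s2c[of "n-1-k"] ck1 k(1) by simp
    moreover have "(\<Sum>q<k. x (pB+1+q)) = S"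
    proof -
      have "(\<Sum>q<k. x (pB+1+q)) = (\<Sum>q<k. c (n-k+q))"
      proof (rule sum.cong)
        fix q assume "q \<in> {..<k}"
        then have e: "pB+1+q = s2+1+(n-k+q)" and l: "n-k+q < n" using k(1) unfolding pB_def by auto
        show "x (pB+1+q) = c (n-k+q)" unfolding e by (rule s2c[OF l])
      qed simp
      then show ?thesis using Srev by simp
    qed
    moreover have "x (pB+1+k) = 1"
    proof -
      have "pB+1+k = s2+n+1" using k(1) unfolding pB_def by simp
      then show ?thesis using p0 by simp
    qed
    ultimately have "W x pB (Suc (Suc k)) = S + 2" unfolding W_decomp by simp
    then have "W x pB (Suc (Suc k)) \<ge> W x s1 (Suc (Suc k)) + 2" using WA by simp
    then show False by (rule unb)
  next
    case False
    then have ck: "c k = 1" using bin2 unfolding c_def by metis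
    then have ck1: "c (n-1-k) = 0" using k(2) bin2 unfolding c_def by metis
    have "(\<Sum>q<k. x (s2+1+q)) = S" unfolding S_def using s2c k(1) by (intro sum.cong) auto
    then have WB: "W x s2 (Suc (Suc k)) = S + 2"
      unfolding W_decomp using p0 ck s2c[of k] k(1) by simp
    define pA where "pA = s1 + 1 + (n-1-k)"
    have "x pA = 0" unfolding pA_def using ck1 unfolding c_def by simp
    moreover have "(\<Sum>q<k. x (pA+1+q)) = S"
    proof -
      have "(\<Sum>q<k. x (pA+1+q)) = (\<Sum>q<k. c (n-k+q))"
      proof (rule sum.cong)
        fix q assume "q \<in> {..<k}"
        then have "pA+1+q = s1+1+(n-k+q)" using k(1) unfolding pA_def by auto
        then show "x (pA+1+q) = c (n-k+q)" unfolding c_def by (simp only:)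
      qed simp
      then show ?thesis using Srev by simp
    qed
    moreover have "x (pA+1+k) = 0"
    proof -
      have "pA+1+k = s1+n+1" using k(1) unfolding pA_def by simp
      then show ?thesis using p0 by simp
    qed
    ultimately have "W x pA (Suc (Suc k)) = S" unfolding W_decomp by simp
    then have "W x s2 (Suc (Suc k)) \<ge> W x pA (Suc (Suc k)) + 2" using WB by simp
    then show False by (rule unb)
  qed
qed



lemma win_Cons: "win x s (Suc m) = x s # win x (Suc s) m"
proof -
  have "[s..<s+Suc m] = s # [Suc s..<Suc s+m]" by (subst upt_conv_Cons) auto
  then show ?thesis by (simp add: win_def)
qed

lemma win_SS: "win x s (Suc (Suc m)) = [x s] @ win x (s+1) m @ [x (s+1+m)]"
proof -
  have a: "win x s (Suc (Suc m)) = x s # win x (Suc s) (Suc m)" by (rule win_Cons)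
  have b: "win x (Suc s) (Suc m) = win x (Suc s) m @ [x (Suc s + m)]" by (rule win_Suc)
  show ?thesis by (simp only: a b) simp
qed

lemma mem_snoc: assumes "length w = n"
  shows "w @ [b] \<in> factors x (Suc n) \<longleftrightarrow> (\<exists>s. win x s n = w \<and> x (s+n) = b)"
proof
  assume "w @ [b] \<in> factors x (Suc n)"
  then obtain s where "w @ [b] = win x s (Suc n)" by (auto simp: factors_win)
  then have "w @ [b] = win x s n @ [x (s+n)]" by (simp add: win_Suc)
  then show "\<exists>s. win x s n = w \<and> x (s+n) = b" by auto
next
  assume "\<exists>s. win x s n = w \<and> x (s+n) = b"
  then obtain s where "win x s n = w" "x (s+n) = b" by blast
  then have "w @ [b] = win x s (Suc n)" by (simp add: win_Suc)
  then show "w @ [b] \<in> factors x (Suc n)" by simp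
qed

lemma mem_cons: assumes "length w = n"
  shows "[c] @ w \<in> factors x (Suc n) \<longleftrightarrow> (\<exists>s. x s = c \<and> win x (s+1) n = w)"
proof
  assume "[c] @ w \<in> factors x (Suc n)"
  then obtain s where "[c] @ w = win x s (Suc n)" by (auto simp: factors_win)
  then have "[c] @ w = [x s] @ win x (s+1) n" by (simp add: win_Cons)
  then show "\<exists>s. x s = c \<and> win x (s+1) n = w" by auto
next
  assume "\<exists>s. x s = c \<and> win x (s+1) n = w"
  then obtain s where "x s = c" "win x (s+1) n = w" by blast
  then have "[c] @ w = win x s (Suc n)" by (simp add: win_Cons)
  then show "[c] @ w \<in> factors x (Suc n)" by simp
qed

lemma mem_cs: assumes "length w = n"
  shows "[c] @ w @ [b] \<in> factors x (Suc (Suc n)) \<longleftrightarrow>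
    (\<exists>s. x s = c \<and> win x (s+1) n = w \<and> x (s+1+n) = b)"
proof
  assume "[c] @ w @ [b] \<in> factors x (Suc (Suc n))"
  then obtain s where "[c] @ w @ [b] = win x s (Suc (Suc n))" by (auto simp: factors_win)
  then have "[c] @ w @ [b] = [x s] @ win x (s+1) n @ [x (s+1+n)]" by (simp only: win_SS)
  then show "\<exists>s. x s = c \<and> win x (s+1) n = w \<and> x (s+1+n) = b" by auto
next
  assume "\<exists>s. x s = c \<and> win x (s+1) n = w \<and> x (s+1+n) = b"
  then obtain s where "x s = c" "win x (s+1) n = w" "x (s+1+n) = b" by blast
  then have "[c] @ w @ [b] = win x s (Suc (Suc n))" by (simp only: win_SS)
  then show "[c] @ w @ [b] \<in> factors x (Suc (Suc n))" by simp
qed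

locale sturm =
  fixes x :: "nat \<Rightarrow> nat"
  assumes bin: "\<forall>i. x i \<le> 1"
    and fin: "\<And>n. finite (factors x n)"
    and cd: "\<And>n. card (factors x n) = n + 1"
begin

lemma bin2: "x a = 0 \<or> x a = 1" using bin[rule_format, of a] by auto

lemma rec: "\<exists>s\<ge>T. win x s l = win x q l"
  using recur[OF fin cd] by blast

end

locale sturm_pat = sturm +
  fixes n s1 s2 :: nat
  assumes p: "pat x n s1 s2"
    and pal: "\<forall>k<n. x (s1+1+k) = x (s1+1+(n-1-k))"
begin

definition w where "w = win x (s1+1) n"
definition occ where "occ t \<longleftrightarrow> win x t n = w"

lemma lw: "length w = n" by (simp add: w_def)

lemma p0: "x s1 = 0" "x (s1+1+n) = 0" "x s2 = 1" "x (s2+1+n) = 1"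
  using p unfolding pat_def by (auto simp: ac_simps)

lemma occ1: "occ (s1+1)" by (simp add: occ_def w_def)
lemma occ2: "occ (s2+1)" using p unfolding occ_def w_def pat_def win_eq_iff by auto

lemma occ_letter: "occ t \<Longrightarrow> k < n \<Longrightarrow> x (t+k) = x (s1+1+k)"
  unfolding occ_def w_def win_eq_iff by blast

lemma rsw: "w @ [0] \<in> factors x (Suc n)" "w @ [1] \<in> factors x (Suc n)"
proof -
  have "win x (s1+1) n = w \<and> x (s1+1+n) = 0" using occ1 p0 unfolding occ_def by simp
  then show "w @ [0] \<in> factors x (Suc n)" unfolding mem_snoc[OF lw] by blast
  have "win x (s2+1) n = w \<and> x (s2+1+n) = 1" using occ2 p0 unfolding occ_def by simp
  then show "w @ [1] \<in> factors x (Suc n)" unfolding mem_snoc[OF lw] by blast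
qed

lemma det: assumes "win x a n = win x b n" "win x a n \<noteq> w" shows "x (a+n) = x (b+n)"
proof (rule ccontr)
  assume ne: "x (a+n) \<noteq> x (b+n)"
  let ?v = "win x a n"
  have "?v @ [x (a+n)] \<in> factors x (Suc n)" "?v @ [x (b+n)] \<in> factors x (Suc n)"
    using assms(1) by (auto simp: mem_snoc)
  then have "?v @ [0] \<in> factors x (Suc n) \<and> ?v @ [1] \<in> factors x (Suc n)"
    using ne bin2[of "a+n"] bin2[of "b+n"] by auto
  then have "?v = w" using rs_unique[OF fin cd] rsw by blast
  then show False using assms(2) by simp
qed

lemma sync2:
  assumes "win x a n = win x b n" "\<forall>j<k. win x (a+j) n \<noteq> w"
  shows "\<forall>q<k+n. x (a+q) = x (b+q)"
  using assms(2)
proof (induction k)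
  case 0 then show ?case using assms(1) by (simp add: win_eq_iff)
next
  case (Suc k)
  then have IH: "\<forall>q<k+n. x (a+q) = x (b+q)" by simp
  have "win x (a+k) n = win x (b+k) n" unfolding win_eq_iff using IH by (simp add: add.assoc)
  moreover have "win x (a+k) n \<noteq> w" using Suc.prems by simp
  ultimately have "x (a+k+n) = x (b+k+n)" by (rule det)
  then show ?case using IH by (auto simp: less_Suc_eq add.assoc)
qed

definition ret where "ret t = (LEAST L. 0 < L \<and> occ (t+L))"

lemma ret_props: assumes "occ t"
  shows "0 < ret t" "occ (t + ret t)" "\<And>j. 0 < j \<Longrightarrow> j < ret t \<Longrightarrow> \<not> occ (t+j)"
proof -
  obtain s where "s \<ge> t+1" "win x s n = win x t n" using rec by blast
  then have ex: "0 < s - t \<and> occ (t + (s-t))" using assms unfolding occ_def by auto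
  show "0 < ret t" "occ (t + ret t)" unfolding ret_def using LeastI[of "\<lambda>L. 0 < L \<and> occ (t+L)", OF ex] by auto
  fix j assume "0 < j" "j < ret t"
  then show "\<not> occ (t+j)" unfolding ret_def using not_less_Least by blast
qed

lemma fact1:
  assumes ot: "occ t" and otau: "occ \<tau>" and nx: "x (t+n) = x (\<tau>+n)"
  shows "occ (t + ret \<tau>)" "\<And>j. 0 < j \<Longrightarrow> j < ret \<tau> \<Longrightarrow> \<not> occ (t+j)"
    "x (t + ret \<tau> - 1) = x (\<tau> + ret \<tau> - 1)"
proof -
  define R where "R = ret \<tau>"
  have R: "0 < R" "occ (\<tau>+R)" "\<And>j. 0 < j \<Longrightarrow> j < R \<Longrightarrow> \<not> occ (\<tau>+j)"
    using ret_props[OF otau] unfolding R_def by auto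
  have w1: "win x (\<tau>+1) n = win x (t+1) n"
    unfolding win_eq_iff
  proof (intro allI impI)
    fix q assume "q < n"
    show "x (\<tau>+1+q) = x (t+1+q)"
    proof (cases "Suc q < n")
      case True then show ?thesis using occ_letter[OF ot True] occ_letter[OF otau True] by simp
    next
      case False then have "q = n - 1" using \<open>q<n\<close> by simp
      then show ?thesis using nx \<open>q<n\<close> by simp
    qed
  qed
  have "\<forall>j<R-1. win x (\<tau>+1+j) n \<noteq> w"
  proof (intro allI impI)
    fix j assume "j < R-1"
    then have "\<not> occ (\<tau>+(1+j))" using R(3)[of "1+j"] by simp
    then show "win x (\<tau>+1+j) n \<noteq> w" unfolding occ_def by (simp add: add.assoc)
  qed
  then have L: "\<forall>q<R-1+n. x (\<tau>+1+q) = x (t+1+q)" using sync2[OF w1] by blast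
  have wj: "win x (t+j) n = win x (\<tau>+j) n" if "0 < j" "j \<le> R" for j
    unfolding win_eq_iff
  proof (intro allI impI)
    fix q assume "q < n"
    have "j - 1 + q < R - 1 + n" using that \<open>q<n\<close> by simp
    then have "x (\<tau>+1+(j-1+q)) = x (t+1+(j-1+q))" using L by blast
    moreover have "\<tau>+1+(j-1+q) = \<tau>+j+q" "t+1+(j-1+q) = t+j+q" using that by auto
    ultimately show "x (t+j+q) = x (\<tau>+j+q)" by (simp add: add.assoc)
  qed
  show "occ (t + ret \<tau>)" using wj[of R] R unfolding occ_def R_def[symmetric] by simp
  show "\<not> occ (t+j)" if "0 < j" "j < ret \<tau>" for j
    using wj[of j] R(3)[of j] that unfolding occ_def R_def[symmetric] by simp
  show "x (t + ret \<tau> - 1) = x (\<tau> + ret \<tau> - 1)"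
  proof (cases "R = 1")
    case True
    show ?thesis
    proof (cases "n = 0")
      case True then show ?thesis using nx \<open>R = 1\<close> unfolding R_def by simp
    next
      case False
      then have "0 < n" by simp
      then have "x (t+0) = x (\<tau>+0)" using occ_letter[OF ot, of 0] occ_letter[OF otau, of 0] by simp
      then show ?thesis using \<open>R=1\<close> unfolding R_def by simp
    qed
  next
    case False
    then have "R - 2 < R - 1 + n" "t+1+(R-2) = t + R - 1" "\<tau>+1+(R-2) = \<tau> + R - 1" using R(1) by auto
    then show ?thesis using L unfolding R_def[symmetric] by metis
  qed
qed

lemma step_prev:
  assumes "occ t" "occ t'" "t < t'" "\<forall>j. t < j \<and> j < t' \<longrightarrow> \<not> occ j"
  shows "\<exists>\<tau>. occ \<tau> \<and> x (\<tau>+n) = x (t+n) \<and> t' = t + ret \<tau> \<and> x (t'-1) = x (\<tau> + ret \<tau> - 1)"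
proof -
  have bt: "x (t+n) = x (s1+1+n) \<or> x (t+n) = x (s2+1+n)" using bin2[of "t+n"] p0 by auto
  obtain \<tau> where otau: "occ \<tau>" and nx: "x (t+n) = x (\<tau>+n)"
    using bt occ1 occ2 by blast
  note f = fact1[OF assms(1) otau nx]
  have "t' = t + ret \<tau>"
  proof (rule ccontr)
    assume "t' \<noteq> t + ret \<tau>"
    then consider "t' < t + ret \<tau>" | "t + ret \<tau> < t'" by linarith
    then show False
    proof cases
      case 1
      then have "\<not> occ (t + (t'-t))" using f(2)[of "t'-t"] assms(3) by simp
      then show False using assms(2,3) by simp
    next
      case 2
      then show False using f(1) assms(4) ret_props(1)[OF otau] by auto
    qed
  qed
  then show ?thesis using otau nx f(3) by auto
qed

lemma prev_ex:
  assumes "occ t0" "occ t'" "t0 < t'"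
  shows "\<exists>t. occ t \<and> t0 \<le> t \<and> t < t' \<and> (\<forall>j. t < j \<and> j < t' \<longrightarrow> \<not> occ j)"
proof -
  define S where "S = {t. t0 \<le> t \<and> t < t' \<and> occ t}"
  have fS: "finite S" unfolding S_def by (rule finite_subset[of _ "{..<t'}"]) auto
  have "t0 \<in> S" using assms unfolding S_def by auto
  then have "Max S \<in> S" using fS by (intro Max_in) auto
  moreover have "\<forall>j. Max S < j \<and> j < t' \<longrightarrow> \<not> occ j"
  proof (intro allI impI)
    fix j assume j: "Max S < j \<and> j < t'"
    show "\<not> occ j"
    proof
      assume "occ j"
      then have "j \<in> S" using j \<open>Max S \<in> S\<close> unfolding S_def by auto
      then have "j \<le> Max S" using fS by simp
      then show False using j by simp
    qed
  qed
  ultimately show ?thesis unfolding S_def by blast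
qed

end



context sturm_pat
begin

definition tau :: "nat \<Rightarrow> nat" where "tau a = (if a = 0 then s1+1 else s2+1)"
definition LL :: "nat \<Rightarrow> nat" where "LL a = ret (tau a)"
definition pp :: "nat \<Rightarrow> nat" where "pp a = x (tau a + LL a - 1)"

lemma occ_tau: "occ (tau a)" using occ1 occ2 by (simp add: tau_def)

lemma tau_next: "a \<le> 1 \<Longrightarrow> x (tau a + n) = a"
  using p0 by (cases "a = 0") (auto simp: tau_def ac_simps)

lemma step2:
  assumes ot: "occ t" and "occ t'" "t < t'" "\<forall>j. t < j \<and> j < t' \<longrightarrow> \<not> occ j"
  shows "x (t'-1) = pp (x (t+n))"
proof -
  define a where "a = x (t+n)"
  have nx: "x (t+n) = x (tau a + n)" using tau_next[of a] bin unfolding a_def by auto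
  note f = fact1[OF ot occ_tau nx]
  have "t' = t + LL a"
  proof (rule ccontr)
    assume "t' \<noteq> t + LL a"
    then consider "t' < t + LL a" | "t + LL a < t'" by linarith
    then show False
    proof cases
      case 1
      then have "\<not> occ (t + (t'-t))" using f(2)[of "t'-t"] assms(3) unfolding LL_def by simp
      then show False using assms(2,3) by simp
    next
      case 2
      then show False using f(1) assms(4) ret_props(1)[OF occ_tau[of a]] unfolding LL_def by auto
    qed
  qed
  then show ?thesis using f(3) unfolding pp_def a_def LL_def by simp
qed

lemma claimA: "pp 0 \<noteq> pp 1"
proof -
  have get: "\<exists>a. pp a = c" if sc: "x sc = c" "occ (sc+1)" for c sc
  proof -
    obtain s where s: "s \<ge> s1+1+1" "win x s (Suc n) = win x sc (Suc n)" using rec by blast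
    then have "x s = c" "occ (s+1)" using sc unfolding win_Cons occ_def by auto
    obtain t where t: "occ t" "s1+1 \<le> t" "t < s+1" "\<forall>j. t < j \<and> j < s+1 \<longrightarrow> \<not> occ j"
      using prev_ex[OF occ1 \<open>occ (s+1)\<close>] s(1) by auto
    have "x (s+1-1) = pp (x (t+n))" using step2[OF t(1) \<open>occ (s+1)\<close> t(3,4)] .
    then have "pp (x (t+n)) = c" using \<open>x s = c\<close> by simp
    then show ?thesis by blast
  qed
  obtain a0 where "pp a0 = 0" using get[of s1 0] p0 occ1 by auto
  obtain a1 where "pp a1 = 1" using get[of s2 1] p0 occ2 by auto
  show ?thesis
  proof
    assume eq: "pp 0 = pp 1"
    have "pp a = pp 0" for a
    proof (cases "a = 0")
      case False
      then have "pp a = pp 1" by (simp add: pp_def tau_def LL_def)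
      then show ?thesis using eq by simp
    qed simp
    then have "pp a0 = pp a1" by metis
    then show False using \<open>pp a0 = 0\<close> \<open>pp a1 = 1\<close> by simp
  qed
qed

end



context sturm_pat
begin

lemma inj_ret: assumes ot: "occ \<tau>" shows "inj_on (\<lambda>j. win x (\<tau>+j) n) {..<ret \<tau>}"
proof -
  define R where "R = ret \<tau>"
  have R: "0 < R" "occ (\<tau>+R)" "\<And>j. 0 < j \<Longrightarrow> j < R \<Longrightarrow> \<not> occ (\<tau>+j)"
    using ret_props[OF ot] unfolding R_def by auto
  have key: False if ab: "a < b" "b < R" "win x (\<tau>+a) n = win x (\<tau>+b) n" for a b
  proof (cases "a = 0")
    case True
    then have "win x \<tau> n = win x (\<tau>+b) n" using ab(3) by simp
    then have "occ (\<tau>+b)" using ot unfolding occ_def by simp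
    then show False using R(3)[of b] ab by simp
  next
    case False
    define k where "k = R - b"
    have "\<forall>j<k. win x (\<tau>+a+j) n \<noteq> w"
    proof (intro allI impI)
      fix j assume "j < k"
      then have h2: "a + j < R" using ab unfolding k_def by linarith
      have h1: "0 < a + j" using False by simp
      have "\<not> occ (\<tau>+(a+j))" by (rule R(3)[OF h1 h2])
      then show "win x (\<tau>+a+j) n \<noteq> w" unfolding occ_def by (simp add: add.assoc)
    qed
    then have L: "\<forall>q<k+n. x (\<tau>+a+q) = x (\<tau>+b+q)" using sync2[OF ab(3)] by blast
    have "win x (\<tau>+a+k) n = win x (\<tau>+b+k) n" unfolding win_eq_iff
    proof (intro allI impI)
      fix q assume "q < n"
      then have "k+q < k+n" by simp
      then have "x (\<tau>+a+(k+q)) = x (\<tau>+b+(k+q))" using L by blast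
      then show "x (\<tau>+a+k+q) = x (\<tau>+b+k+q)" by (simp add: add.assoc)
    qed
    moreover have "b+k = R" unfolding k_def using ab by linarith
    then have "\<tau>+b+k = \<tau>+R" by (simp add: add.assoc)
    ultimately have "win x (\<tau>+a+k) n = w" using R(2) unfolding occ_def by metis
    then have "occ (\<tau>+(a+k))" unfolding occ_def by (simp add: add.assoc)
    moreover have h1: "0 < a+k" using False by simp
    moreover have h2: "a+k < R" using ab unfolding k_def by linarith
    ultimately show False using R(3)[OF h1 h2] by simp
  qed
  show ?thesis
  proof (rule inj_onI)
    fix a b assume "a \<in> {..<ret \<tau>}" "b \<in> {..<ret \<tau>}" "win x (\<tau>+a) n = win x (\<tau>+b) n"
    then have h: "a < R" "b < R" "win x (\<tau>+a) n = win x (\<tau>+b) n" unfolding R_def by auto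
    show "a = b"
    proof (rule ccontr)
      assume "a \<noteq> b"
      then consider "a < b" | "b < a" by linarith
      then show False
      proof cases
        case 1 then show False using key[of a b] h by blast
      next
        case 2
        have "win x (\<tau>+b) n = win x (\<tau>+a) n" using h(3) by simp
        then show False using key[of b a] h 2 by blast
      qed
    qed
  qed
qed

lemma disj_ret:
  assumes ot: "occ \<tau>" and ot': "occ \<tau>'" and j: "0 < j" "j < ret \<tau>" and j': "0 < j'" "j' < ret \<tau>'"
    and eq: "win x (\<tau>'+j') n = win x (\<tau>+j) n" and le: "ret \<tau> - j \<le> ret \<tau>' - j'"
  shows "x (\<tau>+ret \<tau>-1) = x (\<tau>'+ret \<tau>'-1)"
proof -
  define R where "R = ret \<tau>"
  define R' where "R' = ret \<tau>'"
  have R: "0 < R" "occ (\<tau>+R)" "\<And>j. 0 < j \<Longrightarrow> j < R \<Longrightarrow> \<not> occ (\<tau>+j)"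
    using ret_props[OF ot] unfolding R_def by auto
  have R': "0 < R'" "occ (\<tau>'+R')" "\<And>j. 0 < j \<Longrightarrow> j < R' \<Longrightarrow> \<not> occ (\<tau>'+j)"
    using ret_props[OF ot'] unfolding R'_def by auto
  have jR: "j < R" using j R_def by simp
  have jR': "j' < R'" using j' R'_def by simp
  have le': "R - j \<le> R' - j'" using le unfolding R_def R'_def .
  define k where "k = R - j"
  have k1: "k \<ge> 1" using jR unfolding k_def by simp
  have jk: "j + k = R" using jR unfolding k_def by simp
  have jk': "j' + k \<le> R'" using le' jR' unfolding k_def by linarith
  have "\<forall>i<k. win x (\<tau>'+j'+i) n \<noteq> w"
  proof (intro allI impI)
    fix i assume "i < k"
    then have h2: "j'+i < R'" using jk' by linarith
    have h1: "0 < j'+i" using j' by simp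
    have "\<not> occ (\<tau>'+(j'+i))" by (rule R'(3)[OF h1 h2])
    then show "win x (\<tau>'+j'+i) n \<noteq> w" unfolding occ_def by (simp add: add.assoc)
  qed
  then have L: "\<forall>q<k+n. x (\<tau>'+j'+q) = x (\<tau>+j+q)" using sync2[OF eq] by blast
  have "win x (\<tau>'+j'+k) n = win x (\<tau>+j+k) n" unfolding win_eq_iff
  proof (intro allI impI)
    fix q assume "q < n"
    then have "k+q < k+n" by simp
    then have "x (\<tau>'+j'+(k+q)) = x (\<tau>+j+(k+q))" using L by blast
    then show "x (\<tau>'+j'+k+q) = x (\<tau>+j+k+q)" by (simp add: add.assoc)
  qed
  moreover have "\<tau>+j+k = \<tau>+R" using jk by (simp add: add.assoc)
  ultimately have "win x (\<tau>'+j'+k) n = w" using R(2) unfolding occ_def by metis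
  then have oc: "occ (\<tau>'+(j'+k))" unfolding occ_def by (simp add: add.assoc)
  have jkR: "j'+k = R'"
  proof (rule ccontr)
    assume "j'+k \<noteq> R'"
    then have h2: "j'+k < R'" using jk' by simp
    have h1: "0 < j'+k" using j' by simp
    show False using R'(3)[OF h1 h2] oc by simp
  qed
  have "k - 1 < k + n" using k1 by simp
  then have X: "x (\<tau>'+j'+(k-1)) = x (\<tau>+j+(k-1))" using L by blast
  have e1: "\<tau>'+j'+(k-1) = \<tau>'+R'-1" using k1 jkR by simp
  have e2: "\<tau>+j+(k-1) = \<tau>+R-1" using k1 jk by simp
  have "x (\<tau>+R-1) = x (\<tau>'+R'-1)" using X e1 e2 by simp
  then show ?thesis unfolding R_def R'_def .
qed

end



context sturm_pat
begin

lemma count: "LL 0 + LL 1 \<le> n + 2"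
proof -
  define A where "A = (\<lambda>j. win x (tau 0 + j) n) ` {..<LL 0}"
  define B where "B = (\<lambda>j. win x (tau 1 + j) n) ` {..<LL 1}"
  have cA: "card A = LL 0" unfolding A_def LL_def using inj_ret[OF occ_tau[of 0]] by (simp add: card_image)
  have cB: "card B = LL 1" unfolding B_def LL_def using inj_ret[OF occ_tau[of 1]] by (simp add: card_image)
  have fA: "finite A" "finite B" unfolding A_def B_def by auto
  have sub: "A \<union> B \<subseteq> factors x n" unfolding A_def B_def by auto
  have "card (A \<union> B) \<le> card (factors x n)" using fin by (intro card_mono sub) auto
  then have cU: "card (A \<union> B) \<le> n + 1" using cd by simp
  have I: "A \<inter> B \<subseteq> {w}"
  proof
    fix v assume "v \<in> A \<inter> B"
    then obtain j0 j1 where j0: "j0 < LL 0" "v = win x (tau 0 + j0) n"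
      and j1: "j1 < LL 1" "v = win x (tau 1 + j1) n" unfolding A_def B_def by auto
    show "v \<in> {w}"
    proof (cases "j0 = 0 \<or> j1 = 0")
      case True
      then show ?thesis using j0 j1 occ_tau[of 0] occ_tau[of 1] unfolding occ_def by auto
    next
      case False
      then have p0': "0 < j0" "0 < j1" by auto
      have "pp 0 = pp 1"
      proof (cases "LL 0 - j0 \<le> LL 1 - j1")
        case True
        have "x (tau 0 + ret (tau 0) - 1) = x (tau 1 + ret (tau 1) - 1)"
          by (rule disj_ret[OF occ_tau occ_tau p0'(1) j0(1)[unfolded LL_def] p0'(2) j1(1)[unfolded LL_def]])
             (use j0 j1 True in \<open>simp_all add: LL_def\<close>)
        then show ?thesis unfolding pp_def LL_def .
      next
        case False
        have "x (tau 1 + ret (tau 1) - 1) = x (tau 0 + ret (tau 0) - 1)"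
          by (rule disj_ret[OF occ_tau occ_tau p0'(2) j1(1)[unfolded LL_def] p0'(1) j0(1)[unfolded LL_def]])
             (use j0 j1 False in \<open>simp_all add: LL_def\<close>)
        then show ?thesis unfolding pp_def LL_def by simp
      qed
      then show ?thesis using claimA by simp
    qed
  qed
  have "card (A \<inter> B) \<le> card {w}" by (rule card_mono) (use I in auto)
  then have "card (A \<inter> B) \<le> 1" by simp
  moreover have "card A + card B = card (A \<union> B) + card (A \<inter> B)"
    using card_Un_Int[OF fA] .
  ultimately show ?thesis using cA cB cU by linarith
qed

lemma claimB: assumes a: "a \<le> 1" and le: "LL a \<le> n + 1" shows "pp a = a"
proof -
  define R where "R = LL a"
  have R: "0 < R" "occ (tau a + R)" using ret_props[OF occ_tau[of a]] unfolding R_def LL_def by auto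
  show ?thesis
  proof (cases "R = n + 1")
    case True
    then show ?thesis unfolding pp_def R_def[symmetric] using tau_next[OF a] by simp
  next
    case False
    then have Rn: "R \<le> n" using le unfolding R_def by simp
    have e1: "pp a = x (s1+1+(R-1))"
    proof -
      have "R - 1 < n" using Rn R(1) by simp
      then have "x (tau a + (R-1)) = x (s1+1+(R-1))" by (rule occ_letter[OF occ_tau])
      moreover have "tau a + (R-1) = tau a + R - 1" using R(1) by simp
      ultimately show ?thesis unfolding pp_def R_def[symmetric] by simp
    qed
    have e2: "a = x (s1+1+(n-R))"
    proof -
      have "n - R < n" using Rn R(1) by simp
      then have "x (tau a + R + (n-R)) = x (s1+1+(n-R))" by (rule occ_letter[OF R(2)])
      moreover have "tau a + R + (n-R) = tau a + n" using Rn by simp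
      ultimately show ?thesis using tau_next[OF a] by simp
    qed
    have "R - 1 < n" using Rn R(1) by simp
    then have "x (s1+1+(R-1)) = x (s1+1+(n-1-(R-1)))" using pal by blast
    moreover have "n-1-(R-1) = n - R" using R(1) Rn by simp
    ultimately show ?thesis using e1 e2 by simp
  qed
qed

lemma pp01: "pp 0 = 0 \<and> pp 1 = 1"
proof -
  have b: "pp a \<le> 1" for a unfolding pp_def using bin by simp
  have "LL 0 \<le> n + 1 \<or> LL 1 \<le> n + 1" using count by linarith
  then show ?thesis
  proof
    assume "LL 0 \<le> n + 1"
    then have "pp 0 = 0" using claimB[of 0] by simp
    moreover have "pp 1 \<noteq> 0" using claimA calculation by simp
    ultimately show ?thesis using b[of 1] by simp
  next
    assume "LL 1 \<le> n + 1"
    then have "pp 1 = 1" using claimB[of 1] by simp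
    moreover have "pp 0 \<noteq> 1" using claimA calculation by simp
    ultimately show ?thesis using b[of 0] by simp
  qed
qed

lemma step3:
  assumes "occ t" "occ t'" "t < t'" "\<forall>j. t < j \<and> j < t' \<longrightarrow> \<not> occ j"
  shows "x (t'-1) = x (t+n)"
  using step2[OF assms] pp01 bin2[of "t+n"] by auto

lemma final: False
proof -
  have ne: "\<not> ([0] @ w @ [1] \<in> factors x (Suc (Suc n)) \<and> [1] @ w @ [0] \<in> factors x (Suc (Suc n)))"
  proof
    assume h: "[0] @ w @ [1] \<in> factors x (Suc (Suc n)) \<and> [1] @ w @ [0] \<in> factors x (Suc (Suc n))"
    have a00: "[0] @ w @ [0] \<in> factors x (Suc (Suc n))"
      unfolding mem_cs[OF lw] using p0 occ1 unfolding occ_def by auto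
    have a11: "[1] @ w @ [1] \<in> factors x (Suc (Suc n))"
      unfolding mem_cs[OF lw] using p0 occ2 unfolding occ_def by auto
    have "[0] @ w = [1] @ w"
      by (rule rs_unique[OF fin cd]) (use h a00 a11 in simp_all)
    then show False by simp
  qed
  then obtain a where a: "a \<le> 1" "[a] @ w @ [1-a] \<notin> factors x (Suc (Suc n))"
    by (metis diff_zero le_numeral_extra(4) zero_le cancel_comm_monoid_add_class.diff_cancel)
  have aa: "\<exists>sa. x sa = a \<and> occ (sa+1) \<and> x (sa+1+n) = a"
  proof (cases "a = 0")
    case True then show ?thesis using p0 occ1 by auto
  next
    case False then have "a = 1" using a(1) by simp
    then show ?thesis using p0 occ2 by auto
  qed
  have ba: "\<exists>sb. x sb = 1-a \<and> occ (sb+1)"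
  proof (cases "a = 0")
    case True then show ?thesis using p0 occ2 by auto
  next
    case False then have "a = 1" using a(1) by simp
    then show ?thesis using p0 occ1 by auto
  qed
  obtain sa where sa: "x sa = a" "occ (sa+1)" "x (sa+1+n) = a" using aa by blast
  obtain sb where sb: "x sb = 1-a" "occ (sb+1)" using ba by blast
  have absorb: "\<forall>t'. t0 \<le> t' \<longrightarrow> occ t' \<longrightarrow> x (t'-1) = a"
    if t0: "occ t0" "1 \<le> t0" "x (t0-1) = a" for t0
  proof (intro allI)
    fix t' show "t0 \<le> t' \<longrightarrow> occ t' \<longrightarrow> x (t'-1) = a"
    proof (induction t' rule: less_induct)
      case (less t')
      show ?case
      proof (intro impI)
        assume le: "t0 \<le> t'" and ot': "occ t'"
        show "x (t'-1) = a"
        proof (cases "t' = t0")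
          case True then show ?thesis using t0 by simp
        next
          case False
          then have lt: "t0 < t'" using le by simp
          obtain t where t: "occ t" "t0 \<le> t" "t < t'" "\<forall>j. t < j \<and> j < t' \<longrightarrow> \<not> occ j"
            using prev_ex[OF t0(1) ot' lt] by blast
          have xt: "x (t-1) = a" using less.IH[OF t(3)] t(1,2) by simp
          have "x (t+n) = a"
          proof (rule ccontr)
            assume "x (t+n) \<noteq> a"
            then have "x (t+n) = 1 - a" using bin2[of "t+n"] a(1) by auto
            moreover have "t - 1 + 1 = t" using t(2) t0(2) by simp
            ultimately have "\<exists>s. x s = a \<and> win x (s+1) n = w \<and> x (s+1+n) = 1-a"
              using xt t(1) unfolding occ_def by metis
            then show False using a(2) unfolding mem_cs[OF lw] by blast
          qed
          then show ?thesis using step3[OF t(1) ot' t(3,4)] by simp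
        qed
      qed
    qed
  qed
  obtain s where s: "s \<ge> 1" "win x s (Suc (Suc n)) = win x sa (Suc (Suc n))" using rec by blast
  then have s': "x s = a" "occ (s+1)" using sa unfolding win_SS occ_def by auto
  obtain s' where s2: "s' \<ge> s+1" "win x s' (Suc n) = win x sb (Suc n)" using rec by blast
  then have s2': "x s' = 1-a" "occ (s'+1)" using sb unfolding win_Cons occ_def by auto
  have h: "\<forall>t'. s+1 \<le> t' \<longrightarrow> occ t' \<longrightarrow> x (t'-1) = a" using absorb[of "s+1"] s' by simp
  then have "s+1 \<le> s'+1 \<longrightarrow> occ (s'+1) \<longrightarrow> x (s'+1-1) = a" by blast
  then have "x (s'+1-1) = a" using s2(1) s2'(2) by simp
  then show False using s2'(1) a(1) by (cases a) auto
qed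

end



lemma (in sturm) balanced: "W x j L \<le> W x i L + 1"
proof (rule ccontr)
  assume "\<not> ?thesis"
  then have "W x j L \<ge> W x i L + 2" by simp
  then have ex: "\<exists>n s1 s2. pat x n s1 s2" using unbal_pat[OF bin] by blast
  define n0 where "n0 = (LEAST n. \<exists>s1 s2. pat x n s1 s2)"
  have "\<exists>s1 s2. pat x n0 s1 s2" unfolding n0_def by (rule LeastI_ex[OF ex])
  then obtain s1 s2 where ps: "pat x n0 s1 s2" by blast
  have mn: "\<forall>n'<n0. \<forall>a b. \<not> pat x n' a b"
  proof (intro allI impI)
    fix n' a b assume "n' < n0"
    then have "\<not> (\<exists>s1 s2. pat x n' s1 s2)" unfolding n0_def by (rule not_less_Least)
    then show "\<not> pat x n' a b" by blast
  qed
  have pal: "\<forall>k<n0. x (s1+1+k) = x (s1+1+(n0-1-k))" by (rule min_pat_pal[OF bin ps mn])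
  interpret sp: sturm_pat x n0 s1 s2 by unfold_locales (fact ps pal)+
  show False by (rule sp.final)
qed

lemma W_mult: "W x i (q * L) = (\<Sum>r<q. W x (i + r*L) L)"
proof (induction q)
  case 0 then show ?case by (simp add: W_def)
next
  case (Suc q)
  have "W x i (Suc q * L) = W x i (q*L + L)" by (simp add: add.commute)
  also have "\<dots> = W x i (q*L) + W x (i + q*L) L" by (rule W_split)
  finally show ?case using Suc by simp
qed

lemma disc_from_bal:
  fixes \<alpha> :: real
  assumes bal: "\<forall>i j. W x j L \<le> W x i L + C"
    and sl: "(\<lambda>n. (\<Sum>i<n. real (x i)) / real n) \<longlonglongrightarrow> \<alpha>"
  shows "\<bar>real (W x i L) - real L * \<alpha>\<bar> \<le> real C"
proof (cases "L = 0")
  case True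
  then show ?thesis by (simp add: W_def)
next
  case False
  define A where "A = real (W x i L)"
  define f where "f q = (\<Sum>k<q*L. real (x k)) / real (q*L)" for q
  have sm: "strict_mono (\<lambda>q. q*L)" using False by (simp add: strict_mono_def)
  have fl: "f \<longlonglongrightarrow> \<alpha>" using LIMSEQ_subseq_LIMSEQ[OF sl sm] unfolding f_def comp_def .
  have fW: "f q = real (W x 0 (q*L)) / real (q*L)" for q unfolding f_def W_def by simp
  have up: "real (W x 0 (q*L)) \<le> real q * (A + C)" for q
  proof -
    have "W x 0 (q*L) \<le> (\<Sum>r<q. W x i L + C)" unfolding W_mult by (rule sum_mono) (use bal in auto)
    then have "W x 0 (q*L) \<le> q * (W x i L + C)" by simp
    then have "real (W x 0 (q*L)) \<le> real (q * (W x i L + C))" by (simp only: of_nat_le_iff)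
    also have "\<dots> = real q * (A + C)" unfolding A_def by simp
    finally show ?thesis .
  qed
  have lo: "real q * (A - C) \<le> real (W x 0 (q*L))" for q
  proof -
    have "(\<Sum>r<q. W x i L) \<le> (\<Sum>r<q. W x (0 + r*L) L + C)" by (rule sum_mono) (use bal in auto)
    then have "q * W x i L \<le> W x 0 (q*L) + q * C" unfolding W_mult by (simp add: sum.distrib)
    then have "real (q * W x i L) \<le> real (W x 0 (q*L) + q * C)" by (simp only: of_nat_le_iff)
    then have "real q * A \<le> real (W x 0 (q*L)) + real q * C" unfolding A_def by simp
    then show ?thesis by (simp add: algebra_simps)
  qed
  have Lp: "real L > 0" using False by simp
  have "\<alpha> \<le> (A + C) / L"
  proof (rule LIMSEQ_le_const2[OF fl], intro exI allI impI)
    fix q :: nat assume "q \<ge> 1"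
    then have qp: "real q > 0" by simp
    have "f q = real (W x 0 (q*L)) / (real q * real L)" using fW by simp
    also have "\<dots> \<le> real q * (A + C) / (real q * real L)"
      using up[of q] qp Lp by (intro divide_right_mono) auto
    also have "\<dots> = (A + C) / L" using qp by simp
    finally show "f q \<le> (A + C) / L" .
  qed
  moreover have "(A - C) / L \<le> \<alpha>"
  proof (rule LIMSEQ_le_const[OF fl], intro exI allI impI)
    fix q :: nat assume "q \<ge> 1"
    then have qp: "real q > 0" by simp
    have "(A - C) / L = real q * (A - C) / (real q * real L)" using qp by simp
    also have "\<dots> \<le> real (W x 0 (q*L)) / (real q * real L)"
      using lo[of q] qp Lp by (intro divide_right_mono) auto
    also have "\<dots> = f q" using fW by simp
    finally show "(A - C) / L \<le> f q" .
  qed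
  ultimately have "\<alpha> * L \<le> A + C" "A - C \<le> \<alpha> * L" using Lp by (simp_all add: field_simps)
  then show ?thesis unfolding A_def by (simp add: abs_le_iff algebra_simps)
qed

lemma periodic_bal:
  assumes "p > 0" "\<forall>i. x (i + p) = x i" "\<forall>i. x i \<le> 1"
  shows "\<forall>i j. W x j L \<le> W x i L + p"
proof -
  have const: "W x i p = W x 0 p" for i
  proof (induction i)
    case 0 then show ?case by simp
  next
    case (Suc i)
    have "W x i (Suc p) = W x i p + x (i+p)" by (rule W_Suc)
    moreover have "W x i (Suc p) = x i + (\<Sum>q<p. x (i+1+q))" by (rule W_Suc_shift)
    moreover have "W x (Suc i) p = (\<Sum>q<p. x (i+1+q))" unfolding W_def by simp
    ultimately have "W x (Suc i) p = W x i p" using assms(2) by (simp add: add.commute)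
    then show ?case using Suc by simp
  qed
  have mult: "W x i (q*p) = q * W x 0 p" for i q
  proof -
    have "(\<Sum>r<q. W x (i + r*p) p) = (\<Sum>r<q. W x 0 p)"
      by (rule sum.cong) (rule refl, rule const)
    then show ?thesis unfolding W_mult by simp
  qed
  have bnd: "(L div p) * W x 0 p \<le> W x i L \<and> W x i L < (L div p) * W x 0 p + p" for i
  proof -
    have L: "L = (L div p) * p + L mod p" by simp
    have "W x i L = W x i ((L div p) * p) + W x (i + (L div p)*p) (L mod p)"
      by (subst L, rule W_split)
    moreover have "W x (i + (L div p)*p) (L mod p) \<le> L mod p" using W_le assms(3) by blast
    moreover have "L mod p < p" using assms(1) by simp
    ultimately show ?thesis using mult by simp
  qed
  show ?thesis
  proof (intro allI)
    fix i j show "W x j L \<le> W x i L + p" using bnd[of i] bnd[of j] by linarith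
  qed
qed

lemma bounded_disc:
  fixes \<alpha> :: real
  assumes bin: "binary_word u" and ps: "periodic_word u \<or> sturmian_word u" and sl: "has_slope u \<alpha>"
  shows "\<exists>C. \<forall>i L. \<bar>real (W u i L) - real L * \<alpha>\<bar> \<le> C"
proof -
  have b1: "\<forall>i. u i \<le> 1"
  proof
    fix i have "u i \<in> {0,1}" using bin unfolding binary_word_def by blast
    then show "u i \<le> 1" by auto
  qed
  have sl': "(\<lambda>n. (\<Sum>i<n. real (u i)) / real n) \<longlonglongrightarrow> \<alpha>" using sl unfolding has_slope_def .
  from ps show ?thesis
  proof
    assume "periodic_word u"
    then obtain p where p: "p > 0" "\<forall>i. u (i + p) = u i" unfolding periodic_word_def by blast
    have h: "\<forall>i j. W u j L \<le> W u i L + p" for L using periodic_bal[OF p b1] by blast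
    have "\<bar>real (W u i L) - real L * \<alpha>\<bar> \<le> real p" for i L by (rule disc_from_bal[OF h sl'])
    then show ?thesis by blast
  next
    assume "sturmian_word u"
    then have "sturm u" unfolding sturmian_word_def sturm_def using b1 by auto
    then have h: "\<forall>i j. W u j L \<le> W u i L + 1" for L using sturm.balanced by blast
    have "\<bar>real (W u i L) - real L * \<alpha>\<bar> \<le> real 1" for i L by (rule disc_from_bal[OF h sl'])
    then show ?thesis by blast
  qed
qed



definition isY :: "gvar \<Rightarrow> bool" where "isY v = (case v of Y _ \<Rightarrow> True | X _ \<Rightarrow> False)"

definition ycount :: "gvar nmon \<Rightarrow> nat" where "ycount t = length (filter isY (leaves t))"

definition TT :: "nat \<Rightarrow> (nat \<Rightarrow> nat) \<Rightarrow> nat \<Rightarrow> nat" where "TT m u i = (\<Sum>r<i. m + u r)"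

lemma leaves_ne: "length (leaves t) \<ge> 1"
  by (induction t) auto

lemma mult_supp:
  assumes "c \<in> supp (A_mult m u v1 v2)"
  shows "\<exists>g1 g2. g1 \<in> supp v1 \<and> g2 \<in> supp v2 \<and> bprod m u g1 g2 = Some c"
proof -
  have "A_mult m u v1 v2 c \<noteq> 0" using assms unfolding supp_def by simp
  then obtain p where "p \<in> supp v1 \<times> supp v2"
    "(if bprod m u (fst p) (snd p) = Some c then v1 (fst p) * v2 (snd p) else 0) \<noteq> 0"
    unfolding A_mult_def by (rule sum.not_neutral_contains_not_neutral) blast
  then show ?thesis by (cases p) (auto split: if_splits)
qed

lemma bprod_SomeD:
  assumes "bprod m u g1 g2 = Some c"
  shows "\<exists>i j. g1 = GZ i j \<and> ((g2 = GA \<and> j < m + u (i-1) \<and> c = GZ i (j+1)) \<or>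
                               (g2 = GB \<and> j = m + u (i-1) \<and> c = GZ (i+1) 1))"
  using assms by (cases g1; cases g2) (auto split: if_splits)

lemma TT_Suc: "TT m u (Suc i) = TT m u i + m + u i"
  by (simp add: TT_def)

lemma eval_struct:
  fixes \<phi> :: "gvar \<Rightarrow> gen \<Rightarrow> 'f::field"
  assumes gs: "graded_subst m u \<phi>" and m1: "m \<ge> 1"
  shows "c \<in> supp (mon_eval m u \<phi> t) \<Longrightarrow>
    (c = GA \<longrightarrow> (\<exists>k. t = Var (X k))) \<and> (c = GB \<longrightarrow> (\<exists>k. t = Var (Y k))) \<and>
    (\<forall>i1 j1. c = GZ i1 j1 \<longrightarrow> (\<exists>i0 j0. 1 \<le> i0 \<and> i0 \<le> i1 \<and> 1 \<le> j0 \<and> j0 \<le> m + u (i0-1) \<and>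
       1 \<le> j1 \<and> j1 \<le> m + u (i1-1) \<and>
       TT m u (i0-1) + j0 + (length (leaves t) - 1) = TT m u (i1-1) + j1 \<and>
       ycount t = (i1 - i0) + (if even i0 then 1 else 0)))"
proof (induction t arbitrary: c)
  case (Var v)
  then have cv: "c \<in> supp (\<phi> v)" by simp
  show ?case
  proof (cases v)
    case (X k)
    then have "\<phi> v \<in> A_even m u" using gs unfolding graded_subst_def by simp
    then have "c \<in> basis_set m u" "c \<in> {GA} \<union> {GZ i j | i j. odd i}"
      using cv unfolding A_even_def A_carrier_def by auto
    then show ?thesis using X by (auto simp: basis_set_def ycount_def isY_def)
  next
    case (Y k)
    then have "\<phi> v \<in> A_odd m u" using gs unfolding graded_subst_def by simp
    then have "c \<in> basis_set m u" "c \<in> {GB} \<union> {GZ i j | i j. even i}"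
      using cv unfolding A_odd_def A_carrier_def by auto
    then show ?thesis using Y by (auto simp: basis_set_def ycount_def isY_def)
  qed
next
  case (Mul s t')
  obtain g1 g2 where g: "g1 \<in> supp (mon_eval m u \<phi> s)" "g2 \<in> supp (mon_eval m u \<phi> t')"
    "bprod m u g1 g2 = Some c"
    using mult_supp Mul.prems by fastforce
  obtain i j where ij: "g1 = GZ i j" and cs: "(g2 = GA \<and> j < m + u (i-1) \<and> c = GZ i (j+1)) \<or>
                               (g2 = GB \<and> j = m + u (i-1) \<and> c = GZ (i+1) 1)"
    using bprod_SomeD[OF g(3)] by blast
  obtain i0 j0 where I: "1 \<le> i0" "i0 \<le> i" "1 \<le> j0" "j0 \<le> m + u (i0-1)" "1 \<le> j" "j \<le> m + u (i-1)"
     "TT m u (i0-1) + j0 + (length (leaves s) - 1) = TT m u (i-1) + j"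
     "ycount s = (i - i0) + (if even i0 then 1 else 0)"
    using Mul.IH(1)[OF g(1)] ij by blast
  have ls: "length (leaves s) \<ge> 1" by (rule leaves_ne)
  have lm: "length (leaves (Mul s t')) - 1 = (length (leaves s) - 1) + length (leaves t')" using ls by simp
  have ym: "ycount (Mul s t') = ycount s + ycount t'" by (simp add: ycount_def)
  from cs show ?case
  proof
    assume a: "g2 = GA \<and> j < m + u (i-1) \<and> c = GZ i (j+1)"
    then obtain k where "t' = Var (X k)" using Mul.IH(2)[OF g(2)] by blast
    then have lt: "length (leaves t') = 1" "ycount t' = 0" by (simp_all add: ycount_def isY_def)
    have yc: "ycount (Mul s t') = (i - i0) + (if even i0 then 1 else 0)" using ym I lt by simp
    have eq: "TT m u (i0-1) + j0 + (length (leaves (Mul s t')) - 1) = TT m u (i-1) + (j+1)"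
      using I(7) lm lt by simp
    show ?thesis
    proof (intro conjI allI impI)
      fix i1 j1 assume "c = GZ i1 j1"
      then have "i1 = i" "j1 = j+1" using a by auto
      then show "\<exists>i0 j0. 1 \<le> i0 \<and> i0 \<le> i1 \<and> 1 \<le> j0 \<and> j0 \<le> m + u (i0-1) \<and>
       1 \<le> j1 \<and> j1 \<le> m + u (i1-1) \<and>
       TT m u (i0-1) + j0 + (length (leaves (Mul s t')) - 1) = TT m u (i1-1) + j1 \<and>
       ycount (Mul s t') = (i1 - i0) + (if even i0 then 1 else 0)"
        using I yc eq a by (intro exI[of _ i0] exI[of _ j0]) auto
    qed (use a in auto)
  next
    assume a: "g2 = GB \<and> j = m + u (i-1) \<and> c = GZ (i+1) 1"
    then obtain k where "t' = Var (Y k)" using Mul.IH(2)[OF g(2)] by blast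
    then have lt: "length (leaves t') = 1" "ycount t' = 1" by (simp_all add: ycount_def isY_def)
    have i1: "i \<ge> 1" using I by simp
    have TTi: "TT m u (i+1-1) = TT m u (i-1) + m + u (i-1)"
      using i1 TT_Suc[of m u "i-1"] by simp
    have yc: "ycount (Mul s t') = (i + 1 - i0) + (if even i0 then 1 else 0)" using ym I lt by simp
    have eq: "TT m u (i0-1) + j0 + (length (leaves (Mul s t')) - 1) = TT m u (i+1-1) + 1"
    proof -
      have jj: "j = m + u (i-1)" using a by simp
      show ?thesis using I(7) lm lt TTi jj ls by linarith
    qed
    show ?thesis
    proof (intro conjI allI impI)
      fix i1 j1 assume "c = GZ i1 j1"
      then have "i1 = i+1" "j1 = 1" using a by auto
      then show "\<exists>i0 j0. 1 \<le> i0 \<and> i0 \<le> i1 \<and> 1 \<le> j0 \<and> j0 \<le> m + u (i0-1) \<and>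
       1 \<le> j1 \<and> j1 \<le> m + u (i1-1) \<and>
       TT m u (i0-1) + j0 + (length (leaves (Mul s t')) - 1) = TT m u (i1-1) + j1 \<and>
       ycount (Mul s t') = (i1 - i0) + (if even i0 then 1 else 0)"
        using I yc eq m1 by (intro exI[of _ i0] exI[of _ j0]) auto
    qed (use a in auto)
  qed
qed



lemma TT_add: "TT m u (a + d) = TT m u a + m*d + W u a d"
  by (induction d) (simp_all add: TT_def W_def)

lemma leaves_count:
  assumes "mset (leaves t) = mset (map X [1..<k+1] @ map Y [1..<l+1])"
  shows "length (leaves t) = k + l" "ycount t = l"
proof -
  show "length (leaves t) = k + l" using mset_eq_length[OF assms] by simp
  have lf: "length (filter P xs) = size (filter_mset P (mset xs))" for P and xs :: "gvar list"
    by (simp only: mset_filter[symmetric] size_mset)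
  have "ycount t = size (filter_mset isY (mset (leaves t)))"
    unfolding ycount_def by (rule lf)
  also have "\<dots> = length (filter isY (map X [1..<k+1] @ map Y [1..<l+1]))"
    unfolding assms by (rule lf[symmetric])
  also have "\<dots> = l" by (simp add: isY_def comp_def)
  finally show "ycount t = l" .
qed

lemma slope_nonneg:
  fixes \<alpha> :: real
  assumes "has_slope u \<alpha>" shows "\<alpha> \<ge> 0"
proof -
  have sl: "(\<lambda>n. (\<Sum>i<n. real (u i)) / real n) \<longlonglongrightarrow> \<alpha>" using assms unfolding has_slope_def .
  show ?thesis
    by (rule LIMSEQ_le_const[OF sl]) (auto intro!: divide_nonneg_nonneg sum_nonneg)
qed

lemma nonzero_struct:
  assumes P: "P_quot_nonzero TYPE('f::field) m u k l" and m1: "m \<ge> 1" and n2: "k + l \<ge> 2"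
  shows "\<exists>i0 j0 i1 j1. 1 \<le> i0 \<and> i0 \<le> i1 \<and> 1 \<le> j0 \<and> j0 \<le> m + u (i0-1) \<and>
       1 \<le> j1 \<and> j1 \<le> m + u (i1-1) \<and>
       TT m u (i0-1) + j0 + (k + l - 1) = TT m u (i1-1) + j1 \<and>
       l = (i1 - i0) + (if even i0 then 1 else 0)"
proof -
  obtain f :: "gvar nmon \<Rightarrow> 'f" where f: "f \<in> P_space k l" "\<not> graded_identity m u f"
    using P unfolding P_quot_nonzero_def by blast
  have ip: "is_poly f" using f(1) unfolding P_space_def by blast
  obtain \<phi> :: "gvar \<Rightarrow> gen \<Rightarrow> 'f" where gs: "graded_subst m u \<phi>" and ne: "poly_eval m u \<phi> f \<noteq> (\<lambda>_. 0)"
    using f(2) ip unfolding graded_identity_def by blast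
  have "\<exists>c. poly_eval m u \<phi> f c \<noteq> 0"
  proof (rule ccontr)
    assume "\<not> (\<exists>c. poly_eval m u \<phi> f c \<noteq> 0)"
    then have "poly_eval m u \<phi> f = (\<lambda>_. 0)" by (intro ext) simp
    then show False using ne by simp
  qed
  then obtain c where "poly_eval m u \<phi> f c \<noteq> 0" by blast
  then have "(\<Sum>t\<in>supp f. f t * mon_eval m u \<phi> t c) \<noteq> 0" unfolding poly_eval_def by simp
  then obtain t where t: "t \<in> supp f" "f t * mon_eval m u \<phi> t c \<noteq> 0"
    by (rule sum.not_neutral_contains_not_neutral)
  have cs: "c \<in> supp (mon_eval m u \<phi> t)" using t(2) unfolding supp_def by auto
  have ms: "mset (leaves t) = mset (map X [1..<k+1] @ map Y [1..<l+1])"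
    using f(1) t(1) unfolding P_space_def by blast
  note lc = leaves_count[OF ms]
  note es = eval_struct[OF gs m1 cs]
  have notvar: "\<not> (\<exists>v. t = Var v)" using lc(1) n2 by auto
  show ?thesis
  proof (cases c)
    case GA
    from conjunct1[OF es] GA obtain k0 where "t = Var (X k0)" by blast
    then show ?thesis using notvar by blast
  next
    case GB
    from conjunct1[OF conjunct2[OF es]] GB obtain k0 where "t = Var (Y k0)" by blast
    then show ?thesis using notvar by blast
  next
    case (GZ i1 j1)
    have "\<forall>i1 j1. c = GZ i1 j1 \<longrightarrow> (\<exists>i0 j0. 1 \<le> i0 \<and> i0 \<le> i1 \<and> 1 \<le> j0 \<and> j0 \<le> m + u (i0-1) \<and>
       1 \<le> j1 \<and> j1 \<le> m + u (i1-1) \<and>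
       TT m u (i0-1) + j0 + (length (leaves t) - 1) = TT m u (i1-1) + j1 \<and>
       ycount t = (i1 - i0) + (if even i0 then 1 else 0))" using conjunct2[OF conjunct2[OF es]] .
    then obtain i0 j0 where H: "1 \<le> i0" "i0 \<le> i1" "1 \<le> j0" "j0 \<le> m + u (i0-1)"
       "1 \<le> j1" "j1 \<le> m + u (i1-1)"
       "TT m u (i0-1) + j0 + (length (leaves t) - 1) = TT m u (i1-1) + j1"
       "ycount t = (i1 - i0) + (if even i0 then 1 else 0)" using GZ by blast
    have H7: "TT m u (i0-1) + j0 + (k + l - 1) = TT m u (i1-1) + j1" using H(7) unfolding lc(1) .
    have H8: "l = (i1 - i0) + (if even i0 then 1 else 0)" using H(8) unfolding lc(2) .
    show ?thesis
      by (rule exI[of _ i0], rule exI[of _ j0], rule exI[of _ i1], rule exI[of _ j1])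
         (intro conjI H(1-6) H7 H8)
  qed
qed



theorem lemma2:
  fixes m :: nat and u :: "nat \<Rightarrow> nat" and \<alpha> \<beta> \<epsilon> :: real
  assumes "m \<ge> 2"
    and "binary_word u"
    and "periodic_word u \<or> sturmian_word u"
    and "has_slope u \<alpha>"
    and "\<beta> = 1 / (m + \<alpha>)"
    and "\<epsilon> > 0"
  shows "\<exists>n0. \<forall>n k. n \<ge> n0 \<and> k \<le> n \<and> P_quot_nonzero TYPE('f::field_char_0) m u k (n - k)
           \<longrightarrow> \<beta> - \<epsilon> \<le> real (n - k) / real n \<and> real (n - k) / real n \<le> \<beta> + \<epsilon>"
proof -
  obtain C where C: "\<forall>i L. \<bar>real (W u i L) - real L * \<alpha>\<bar> \<le> C"
    using bounded_disc[OF assms(2,3,4)] by blast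
  have C0: "C \<ge> 0" using C[rule_format, of 0 0] by (simp add: W_def)
  have a0: "\<alpha> \<ge> 0" by (rule slope_nonneg[OF assms(4)])
  have b1: "\<forall>i. u i \<le> 1"
  proof
    fix i have "u i \<in> {0,1}" using assms(2) unfolding binary_word_def by blast
    then show "u i \<le> 1" by auto
  qed
  define M where "M = real m + \<alpha>"
  have M2: "M \<ge> 2" unfolding M_def using assms(1) a0 by simp
  define K where "K = 2 * real m + 2 + C + \<alpha>"
  have K0: "K \<ge> 0" unfolding K_def using C0 a0 by simp
  define n0 where "n0 = max 2 (nat \<lceil>K / \<epsilon>\<rceil>)"
  show ?thesis
  proof (intro exI[of _ n0] allI impI)
    fix n k assume H: "n0 \<le> n \<and> k \<le> n \<and> P_quot_nonzero TYPE('f::field_char_0) m u k (n - k)"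
    define l where "l = n - k"
    have n2: "n \<ge> 2" using H unfolding n0_def by simp
    have kl: "k + l = n" using H unfolding l_def by simp
    have m1: "m \<ge> 1" using assms(1) by simp
    obtain i0 j0 i1 j1 where S: "1 \<le> i0" "i0 \<le> i1" "1 \<le> j0" "j0 \<le> m + u (i0-1)"
       "1 \<le> j1" "j1 \<le> m + u (i1-1)"
       "TT m u (i0-1) + j0 + (k + l - 1) = TT m u (i1-1) + j1"
       "l = (i1 - i0) + (if even i0 then 1 else 0)"
    proof -
      have P: "P_quot_nonzero TYPE('f::field_char_0) m u k l" using H unfolding l_def by blast
      have "k + l \<ge> 2" using kl n2 by simp
      from nonzero_struct[OF P m1 this] show ?thesis using that by blast
    qed
    define d where "d = i1 - i0"
    define Wd where "Wd = W u (i0-1) d"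
    have "i1 - 1 = (i0 - 1) + d" unfolding d_def using S(1,2) by simp
    then have "TT m u (i1-1) = TT m u (i0-1) + m*d + Wd" unfolding Wd_def by (simp add: TT_add)
    then have E: "j0 + (n - 1) = m*d + Wd + j1" using S(7) kl by simp
    have j0r: "1 \<le> real j0" "real j0 \<le> real m + 1" using S(3,4) b1[rule_format, of "i0-1"] by auto
    have j1r: "1 \<le> real j1" "real j1 \<le> real m + 1" using S(5,6) b1[rule_format, of "i1-1"] by auto
    have Er: "real j0 + (real n - 1) = real m * real d + real Wd + real j1"
    proof -
      have "real (j0 + (n - 1)) = real (m*d + Wd + j1)" using E by simp
      then show ?thesis using n2 by (simp add: of_nat_diff)
    qed
    have Wb: "\<bar>real Wd - real d * \<alpha>\<bar> \<le> C" unfolding Wd_def using C by blast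
    have e: "real l = real d + (if even i0 then 1 else 0)" using S(8) unfolding d_def by simp
    have key: "\<bar>real l * M - real n\<bar> \<le> K"
    proof -
      have "\<bar>real n - (real m * real d + real Wd)\<bar> \<le> real m + 1" using Er j0r j1r unfolding abs_le_iff by linarith
      moreover have "real d * M = real m * real d + real d * \<alpha>" by (simp add: M_def algebra_simps)
      ultimately have A: "\<bar>real n - real d * M\<bar> \<le> real m + 1 + C" using Wb unfolding abs_le_iff by linarith
      moreover have "real d * M \<le> real l * M \<and> real l * M \<le> real d * M + M"
      proof (cases "even i0")
        case True then have "real l = real d + 1" using e by simp
        then have "real l * M = real d * M + M" by (simp add: algebra_simps)
        then show ?thesis using M2 by simp
      next
        case False then have "real l = real d" using e by simp
        then show ?thesis using M2 by simp
      qed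
      moreover have "K = M + real m + 2 + C" using K_def M_def by linarith
      ultimately show ?thesis unfolding abs_le_iff using A M2 by linarith
    qed
    have np: "real n > 0" using n2 by simp
    have nK: "K \<le> real n * \<epsilon>"
    proof -
      have "K / \<epsilon> \<le> real (nat \<lceil>K / \<epsilon>\<rceil>)" by (rule real_nat_ceiling_ge)
      moreover have "nat \<lceil>K / \<epsilon>\<rceil> \<le> n" using H unfolding n0_def by simp
      then have "real (nat \<lceil>K / \<epsilon>\<rceil>) \<le> real n" by (simp only: of_nat_le_iff)
      ultimately have "K / \<epsilon> \<le> real n" by (rule order_trans)
      then show ?thesis using pos_divide_le_eq[OF assms(6)] by blast
    qed
    have Mp: "M > 0" using M2 by simp
    have diff: "real l / real n - \<beta> = (real l * M - real n) / (real n * M)"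
    proof -
      have "\<beta> = 1 / M" unfolding assms(5) M_def ..
      moreover have "real l / real n - 1 / M = (real l * M - 1 * real n) / (real n * M)"
        by (rule diff_frac_eq) (use np Mp in auto)
      ultimately show ?thesis by simp
    qed
    have nM: "real n * M > 0" using np Mp by simp
    have "\<bar>real l / real n - \<beta>\<bar> = \<bar>real l * M - real n\<bar> / (real n * M)"
      unfolding diff abs_divide using nM by simp
    also have "\<dots> \<le> K / (real n * M)" by (rule divide_right_mono[OF key]) (use nM in simp)
    also have "\<dots> \<le> K / real n"
    proof (rule divide_left_mono)
      show "real n \<le> real n * M" using np M2 by simp
      show "0 \<le> K" by (rule K0)
      show "0 < real n * M * real n" using nM np by simp
    qed
    also have "\<dots> \<le> \<epsilon>" using pos_divide_le_eq[OF np] nK by (simp add: mult.commute)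
    finally have fin: "\<bar>real l / real n - \<beta>\<bar> \<le> \<epsilon>" .
    have "real (n - k) / real n = real l / real n" unfolding l_def ..
    then show "\<beta> - \<epsilon> \<le> real (n - k) / real n \<and> real (n - k) / real n \<le> \<beta> + \<epsilon>"
      using fin unfolding abs_le_iff by linarith
  qed
qed


end
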